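(* Let $0<a\le 1$, $b=2-a$, $\tfrac12<c_1<1$, and let $(k_a(t),k_b(t))$ be the Markov chain $K$ described in the context, started from any state with $k_a+k_b\ge 2c_1 n$. Let $\tau$ be the hitting time of $(n,n)$. Then there is a constant $C$ depending only on $a,c_1$ such that, uniformly over such starting states, $$\mathbb{E}\,\tau\le \frac{n}{a(2c_1-1)}\big[\log 2n+\log\log 2n+C\big].$$
   Context: The chain $K$ (it records the numbers $k_a,k_b$ of marked $a$-cards and marked $b$-cards in the second marking phase of a biased transposition shuffle of $N=2n$ cards, $n$ of each type). Its states are pairs $(k_a,k_b)$ of integers with $0\le k_a,k_b\le n$ and $k_a+k_b\ge n$. From $(k_a,k_b)$ it moves to $(k_a,k_b+1)$ with probability $\frac{2ab(n-k_b)(k_a+k_b+1)}{(2n)^2}$; to $(k_a+1,k_b)$ with probability $\frac{2a^2(n-k_a)(k_a+k_b+1)}{(2n)^2}$; to $(k_a+1,k_b-1)$ with probability $\frac{2a(b-a)(n-k_a)k_b}{(2n)^2}$; and otherwise stays put. *)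

theory Defs
  imports "HOL-Analysis.Analysis"
begin

definition K_states :: "nat \<Rightarrow> (nat \<times> nat) set" where
  "K_states n = {(ka, kb). ka \<le> n \<and> kb \<le> n \<and> ka + kb \<ge> n}"

definition K_trans :: "real \<Rightarrow> nat \<Rightarrow> nat \<times> nat \<Rightarrow> nat \<times> nat \<Rightarrow> real" where
  "K_trans a n x y =
    (let ka = fst x; kb = snd x; b = 2 - a; N2 = (2 * real n)^2;
         p1 = 2*a*b*(real n - real kb)*(real ka + real kb + 1) / N2;
         p2 = 2*a^2*(real n - real ka)*(real ka + real kb + 1) / N2;
         p3 = 2*a*(b - a)*(real n - real ka)*real kb / N2
     in (if y = (ka, kb + 1) then p1 else 0)
      + (if y = (ka + 1, kb) then p2 else 0)
      + (if kb \<ge> 1 \<and> y = (ka + 1, kb - 1) then p3 else 0)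
      + (if y = x then 1 - p1 - p2 - p3 else 0))"

text \<open>Probability that the chain started at x has not hit (n,n) at any of the
  times 0,...,t, i.e. P_x(tau > t), via the Markov property.\<close>
primrec K_not_hit :: "real \<Rightarrow> nat \<Rightarrow> nat \<Rightarrow> nat \<times> nat \<Rightarrow> real" where
  "K_not_hit a n 0 x = (if x = (n, n) then 0 else 1)"
| "K_not_hit a n (Suc t) x =
     (if x = (n, n) then 0
      else (\<Sum>y\<in>K_states n. K_trans a n x y * K_not_hit a n t y))"

text \<open>Expected hitting time of (n,n): E_x tau = sum over t of P_x(tau > t).\<close>
definition K_hit_time_exp :: "real \<Rightarrow> nat \<Rightarrow> nat \<times> nat \<Rightarrow> ennreal" where
  "K_hit_time_exp a n x = (\<Sum>t. ennreal (K_not_hit a n t x))"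

end

theory Submission
  imports Defs
begin




definition P1 :: "real \<Rightarrow> nat \<Rightarrow> nat \<Rightarrow> nat \<Rightarrow> real" where
 "P1 a n ka kb = 2*a*(2-a)*(real n - real kb)*(real ka + real kb + 1) / (2 * real n)^2"
definition P2 :: "real \<Rightarrow> nat \<Rightarrow> nat \<Rightarrow> nat \<Rightarrow> real" where
 "P2 a n ka kb = 2*a^2*(real n - real ka)*(real ka + real kb + 1) / (2 * real n)^2"
definition P3 :: "real \<Rightarrow> nat \<Rightarrow> nat \<Rightarrow> nat \<Rightarrow> real" where
 "P3 a n ka kb = 2*a*((2-a)-a)*(real n - real ka)*real kb / (2 * real n)^2"

lemma finite_K: "finite (K_states n)"
proof -
  have "K_states n \<subseteq> {0..n} \<times> {0..n}" by (auto simp: K_states_def)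
  thus ?thesis by (rule finite_subset) auto
qed

lemma sum_trans:
  assumes x: "(ka, kb) \<in> K_states n" and kb: "kb \<ge> 1"
  shows "(\<Sum>y\<in>K_states n. K_trans a n (ka, kb) y * g y) =
     P1 a n ka kb * g (ka, kb+1) + P2 a n ka kb * g (ka+1, kb) + P3 a n ka kb * g (ka+1, kb-1)
     + (1 - P1 a n ka kb - P2 a n ka kb - P3 a n ka kb) * g (ka, kb)"
proof -
  let ?S = "K_states n"
  have e: "K_trans a n (ka, kb) y * g y =
     (if y = (ka, kb+1) then P1 a n ka kb * g (ka, kb+1) else 0)
   + (if y = (ka+1, kb) then P2 a n ka kb * g (ka+1, kb) else 0)
   + (if y = (ka+1, kb-1) then P3 a n ka kb * g (ka+1, kb-1) else 0)
   + (if y = (ka, kb) then (1 - P1 a n ka kb - P2 a n ka kb - P3 a n ka kb) * g (ka, kb) else 0)" for y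
    using kb unfolding K_trans_def Let_def P1_def P2_def P3_def
    by (auto simp: algebra_simps)
  have s1: "(\<Sum>y\<in>?S. (if y = (ka, kb+1) then P1 a n ka kb * g (ka, kb+1) else 0)) = P1 a n ka kb * g (ka, kb+1)"
  proof (cases "(ka, kb+1) \<in> ?S")
    case True thus ?thesis by (simp add: sum.delta[OF finite_K])
  next
    case False
    hence "kb = n" using x by (auto simp: K_states_def)
    thus ?thesis by (simp add: sum.delta[OF finite_K] P1_def)
  qed
  have s2: "(\<Sum>y\<in>?S. (if y = (ka+1, kb) then P2 a n ka kb * g (ka+1, kb) else 0)) = P2 a n ka kb * g (ka+1, kb)"
  proof (cases "(ka+1, kb) \<in> ?S")
    case True thus ?thesis by (simp add: sum.delta[OF finite_K])
  next
    case False
    hence "ka = n" using x by (auto simp: K_states_def)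
    thus ?thesis by (simp add: sum.delta[OF finite_K] P2_def)
  qed
  have s3: "(\<Sum>y\<in>?S. (if y = (ka+1, kb-1) then P3 a n ka kb * g (ka+1, kb-1) else 0)) = P3 a n ka kb * g (ka+1, kb-1)"
  proof (cases "(ka+1, kb-1) \<in> ?S")
    case True thus ?thesis by (simp add: sum.delta[OF finite_K])
  next
    case False
    hence "ka = n" using x kb by (auto simp: K_states_def)
    thus ?thesis by (simp add: sum.delta[OF finite_K] P3_def)
  qed
  have s4: "(\<Sum>y\<in>?S. (if y = (ka, kb) then (1 - P1 a n ka kb - P2 a n ka kb - P3 a n ka kb) * g (ka, kb) else 0)) = (1 - P1 a n ka kb - P2 a n ka kb - P3 a n ka kb) * g (ka, kb)"
    using x by (simp add: sum.delta[OF finite_K])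
  show ?thesis unfolding e sum.distrib s1 s2 s3 s4 by simp
qed


definition W :: "real \<Rightarrow> real \<Rightarrow> real" where
  "W a c1 = 1 + (1-a)*(2*c1-1)/(a*(1-c1))"

definition phi :: "real \<Rightarrow> real \<Rightarrow> nat \<Rightarrow> nat \<times> nat \<Rightarrow> real" where
  "phi a c1 n x = (real n - real (snd x)) + W a c1 * (real n - real (fst x))"



lemma P_sum_bound:
  fixes a A B N :: real
  assumes a0: "0<a" and a1: "a\<le>1" and hA: "0\<le>A" "A\<le>N" and hB: "0\<le>B" "B\<le>N"
    and hN: "N\<ge>1" and s: "A+B \<ge> N+1"
  shows "2*a*(2-a)*(N-B)*(A+B+1)/(2*N)^2 + 2*a^2*(N-A)*(A+B+1)/(2*N)^2
          + 2*a*((2-a)-a)*(N-A)*B/(2*N)^2 \<le> 1"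
proof -
  have ab: "a*(2-a) \<le> 1"
  proof -
    have "a*(2-a) = 1 - (1-a)^2" by (simp add: algebra_simps power2_eq_square)
    thus ?thesis by simp
  qed
  have aa: "a^2 \<le> 1" using a0 a1 by (simp add: power_le_one)
  have a3: "2*a*((2-a)-a) \<le> 1"
  proof -
    have "2*a*((2-a)-a) = 1 - (2*a-1)^2" by (simp add: algebra_simps power2_eq_square)
    thus ?thesis by simp
  qed
  define X1 where "X1 = 2*(N-B)*(A+B+1)"
  define X2 where "X2 = 2*(N-A)*(A+B+1)"
  define X3 where "X3 = (N-A)*B"
  have X0: "X1 \<ge> 0" "X2 \<ge> 0" "X3 \<ge> 0" using hA hB unfolding X1_def X2_def X3_def by auto
  have e1: "2*a*(2-a)*(N-B)*(A+B+1) = (a*(2-a))*X1" unfolding X1_def by (simp add: algebra_simps)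
  have e2: "2*a^2*(N-A)*(A+B+1) = a^2*X2" unfolding X2_def by (simp add: algebra_simps)
  have e3: "2*a*((2-a)-a)*(N-A)*B = (2*a*((2-a)-a))*X3" unfolding X3_def by (simp add: algebra_simps)
  have t1: "(a*(2-a))*X1 \<le> 1*X1" using ab X0 by (intro mult_right_mono) auto
  have t2: "a^2*X2 \<le> 1*X2" using aa X0 by (intro mult_right_mono) auto
  have t3: "(2*a*((2-a)-a))*X3 \<le> 1*X3" using a3 X0 by (intro mult_right_mono) auto
  have X3N: "X3 \<le> (N-A)*N" unfolding X3_def using hA hB by (intro mult_left_mono) auto
  define M where "M = 2*N - (A+B)"
  have X12: "X1 + X2 = 2*M*(A+B+1)" unfolding X1_def X2_def M_def by (simp add: algebra_simps)
  have MN: "(N-A)*N \<le> M*N" unfolding M_def using hA hB by (intro mult_right_mono) auto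
  have e4: "2*M*(A+B+1) + M*N = M*(5*N + 2 - 2*M)" unfolding M_def by (simp add: algebra_simps)
  have k: "M*(5*N + 2 - 2*M) \<le> 4*N^2"
  proof -
    define d where "d = N - M"
    have d1: "d \<ge> 1" using s unfolding d_def M_def by simp
    have M0: "M \<ge> 0" using hA hB unfolding M_def by simp
    have "4*N^2 - M*(5*N + 2 - 2*M) = M^2 + M*(3*d-2) + 4*d^2"
      unfolding d_def by (simp add: algebra_simps power2_eq_square)
    also have "\<dots> \<ge> 0" using d1 M0 by (intro add_nonneg_nonneg) auto
    finally show ?thesis by simp
  qed
  have num: "(a*(2-a))*X1 + a^2*X2 + (2*a*((2-a)-a))*X3 \<le> 4*N^2"
    using t1 t2 t3 X3N X12 MN e4 k by linarith
  have D: "(2*N)^2 = 4*N^2" by (simp add: power_mult_distrib)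
  have pos: "4*N^2 > 0" using hN by simp
  have "2*a*(2-a)*(N-B)*(A+B+1)/(2*N)^2 + 2*a^2*(N-A)*(A+B+1)/(2*N)^2
          + 2*a*((2-a)-a)*(N-A)*B/(2*N)^2
        = ((a*(2-a))*X1 + a^2*X2 + (2*a*((2-a)-a))*X3) / (4*N^2)"
    unfolding e1 e2 e3 D by (simp add: add_divide_distrib)
  also have "\<dots> \<le> 1" using num pos by (simp add: divide_le_eq_1_pos)
  finally show ?thesis .
qed



lemma drift_real:
  fixes a c1 A B N w :: real
  assumes a0: "0<a" and a1: "a\<le>1" and c0: "1/2 < c1" and c1: "c1 < 1"
    and hA: "0\<le>A" "A\<le>N" and hB: "0\<le>B" "B\<le>N" and hN: "N\<ge>1"
    and hB2: "B \<ge> (2*c1-1)*N" and hS: "A+B+1 \<ge> 2*c1*N"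
    and w1: "w \<ge> 1" and wid: "(w-1)*(a*(1-c1)) = (1-a)*(2*c1-1)"
  defines "p1 \<equiv> 2*a*(2-a)*(N-B)*(A+B+1)/(2*N)^2"
      and "p2 \<equiv> 2*a^2*(N-A)*(A+B+1)/(2*N)^2"
      and "p3 \<equiv> 2*a*((2-a)-a)*(N-A)*B/(2*N)^2"
  shows "p1*((N-B) + w*(N-A) - 1) + p2*((N-B) + w*(N-A) - w) + p3*((N-B) + w*(N-A) - w + 1)
     + (1-p1-p2-p3)*((N-B) + w*(N-A)) \<le> (1 - a*(2*c1-1)/N)*((N-B) + w*(N-A))"
proof -
  define r where "r = a*(2*c1-1)"
  have D: "(2*N)^2 = 4*N^2" by (simp add: power_mult_distrib)
  have pos: "4*N^2 > 0" using hN by simp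
  have p1e: "p1 = (N-B) * (2*a*(2-a)*(A+B+1)) / (4*N^2)"
    unfolding p1_def D by (simp add: mult_ac)
  have p23e: "w*p2 + (w-1)*p3 = (N-A) * (2*a^2*w*(A+B+1) + 2*a*((2-a)-a)*(w-1)*B) / (4*N^2)"
  proof -
    have "w*p2 + (w-1)*p3 = (w*(2*a^2*(N-A)*(A+B+1)) + (w-1)*(2*a*((2-a)-a)*(N-A)*B)) / (4*N^2)"
      unfolding p2_def p3_def D by (simp add: add_divide_distrib)
    also have "w*(2*a^2*(N-A)*(A+B+1)) + (w-1)*(2*a*((2-a)-a)*(N-A)*B)
       = (N-A) * (2*a^2*w*(A+B+1) + 2*a*((2-a)-a)*(w-1)*B)" by (simp add: algebra_simps)
    finally show ?thesis .
  qed
  have c1a: "2*a*(2-a)*(A+B+1) \<ge> 4*N*r"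
  proof -
    have m: "(2*a)*1 \<le> (2*a)*(2-a)" using a0 a1 by (intro mult_left_mono) auto
    have "(2*a*1)*(2*c1*N) \<le> (2*a*(2-a))*(A+B+1)"
      apply (rule mult_mono) using m a0 a1 hS c0 hN by auto
    moreover have "2*a*1*(2*c1*N) - 4*N*r = 4*a*N*(1-c1)" unfolding r_def
      by (simp add: algebra_simps)
    moreover have "4*a*N*(1-c1) \<ge> 0" using a0 c1 hN by simp
    ultimately show ?thesis by linarith
  qed
  have h1: "p1 \<ge> r/N*(N-B)"
  proof -
    have "r/N*(N-B) = (N-B)*(4*N*r)/(4*N^2)" using hN by (simp add: power2_eq_square)
    also have "\<dots> \<le> (N-B) * (2*a*(2-a)*(A+B+1)) / (4*N^2)"
      apply (rule divide_right_mono) apply (rule mult_left_mono) using c1a hB pos by auto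
    finally show ?thesis unfolding p1e .
  qed
  have c2a: "2*a^2*w*(A+B+1) + 2*a*((2-a)-a)*(w-1)*B \<ge> 4*N*r*w"
  proof -
    have e1: "2*a^2*w*(A+B+1) \<ge> 2*a^2*w*(2*c1*N)"
      apply (rule mult_left_mono) using hS w1 by auto
    have e2: "2*a*((2-a)-a)*(w-1)*B \<ge> 2*a*((2-a)-a)*(w-1)*((2*c1-1)*N)"
      apply (rule mult_left_mono) using hB2 w1 a0 a1 by auto
    have e3: "2*a^2*w*(2*c1*N) + 2*a*((2-a)-a)*(w-1)*((2*c1-1)*N) - 4*N*r*w
       = 4*a*N*(a*w*(1-c1) - (w-1)*(a*(1-c1)))"
      unfolding r_def wid by (simp add: algebra_simps power2_eq_square)
    have e4: "a*w*(1-c1) - (w-1)*(a*(1-c1)) = a*(1-c1)" by (simp add: algebra_simps)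
    have "4*a*N*(a*(1-c1)) \<ge> 0" using a0 c1 hN by simp
    moreover have "4*a*N*(a*w*(1-c1) - (w-1)*(a*(1-c1))) = 4*a*N*(a*(1-c1))" using e4 by simp
    ultimately show ?thesis using e1 e2 e3 by linarith
  qed
  have h2: "w*p2 + (w-1)*p3 \<ge> r/N*(w*(N-A))"
  proof -
    have "r/N*(w*(N-A)) = (N-A)*(4*N*r*w)/(4*N^2)" using hN by (simp add: power2_eq_square)
    also have "\<dots> \<le> (N-A) * (2*a^2*w*(A+B+1) + 2*a*((2-a)-a)*(w-1)*B) / (4*N^2)"
      apply (rule divide_right_mono) apply (rule mult_left_mono) using c2a hA pos by auto
    finally show ?thesis unfolding p23e .
  qed
  have "p1*((N-B) + w*(N-A) - 1) + p2*((N-B) + w*(N-A) - w) + p3*((N-B) + w*(N-A) - w + 1)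
     + (1-p1-p2-p3)*((N-B) + w*(N-A))
     = ((N-B) + w*(N-A)) - (p1 + (w*p2 + (w-1)*p3))" by (simp add: algebra_simps)
  also have "\<dots> \<le> ((N-B) + w*(N-A)) - (r/N*(N-B) + r/N*(w*(N-A)))"
    using h1 h2 by linarith
  also have "\<dots> = (1 - r/N) * ((N-B) + w*(N-A))"
    by (simp only: left_diff_distrib distrib_left mult_1_left)
  finally show ?thesis unfolding r_def .
qed


lemma reg_facts:
  assumes c0: "1/2 < c1" and n1: "n \<ge> 1" and st: "(ka, kb) \<in> K_states n"
    and big: "real ka + real kb \<ge> 2 * c1 * real n"
  shows "ka \<le> n" "kb \<le> n" "real kb \<ge> (2*c1-1) * real n" "kb \<ge> 1" "ka + kb \<ge> n + 1"
proof -
  show kan: "ka \<le> n" and kbn: "kb \<le> n" using st by (auto simp: K_states_def)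
  have "real ka \<le> real n" using kan by simp
  thus kbge: "real kb \<ge> (2*c1-1) * real n" using big by (simp add: algebra_simps)
  have pos: "(2*c1-1) * real n > 0" using c0 n1 by simp
  with kbge have "real kb > 0" by linarith
  thus "kb \<ge> 1" by simp
  have "2*c1*real n = real n + (2*c1-1) * real n" by (simp add: algebra_simps)
  hence "real ka + real kb > real n" using big pos by linarith
  hence "ka + kb > n" by linarith
  thus "ka + kb \<ge> n + 1" by simp
qed

lemma P_nonneg:
  assumes "0 < a" "a \<le> 1" "(ka, kb) \<in> K_states n"
  shows "P1 a n ka kb \<ge> 0" "P2 a n ka kb \<ge> 0" "P3 a n ka kb \<ge> 0"
  using assms by (auto simp: P1_def P2_def P3_def K_states_def)

lemma P_le1:
  assumes a0: "0 < a" and a1: "a \<le> 1" and c0: "1/2 < c1" and n1: "n \<ge> 1"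
    and st: "(ka, kb) \<in> K_states n" and big: "real ka + real kb \<ge> 2 * c1 * real n"
  shows "P1 a n ka kb + P2 a n ka kb + P3 a n ka kb \<le> 1"
proof -
  note f = reg_facts[OF c0 n1 st big]
  have s: "real ka + real kb \<ge> real n + 1" using f(5)
    by (metis of_nat_1 of_nat_add of_nat_le_iff)
  show ?thesis unfolding P1_def P2_def P3_def
    by (rule P_sum_bound) (use a0 a1 f n1 s in auto)
qed

lemma W1: "0 < a \<Longrightarrow> a \<le> 1 \<Longrightarrow> 1/2 < c1 \<Longrightarrow> c1 < 1 \<Longrightarrow> W a c1 \<ge> 1"
  by (simp add: W_def)

lemma Wid: "0 < a \<Longrightarrow> c1 < 1 \<Longrightarrow> (W a c1 - 1) * (a * (1 - c1)) = (1-a)*(2*c1-1)"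
  by (simp add: W_def)

lemma drift:
  assumes a0: "0 < a" and a1: "a \<le> 1" and c0: "1/2 < c1" and c1: "c1 < 1" and n1: "n \<ge> 1"
    and st: "(ka, kb) \<in> K_states n" and big: "real ka + real kb \<ge> 2 * c1 * real n"
  shows "P1 a n ka kb * phi a c1 n (ka, kb+1) + P2 a n ka kb * phi a c1 n (ka+1, kb)
   + P3 a n ka kb * phi a c1 n (ka+1, kb-1)
   + (1 - P1 a n ka kb - P2 a n ka kb - P3 a n ka kb) * phi a c1 n (ka, kb)
   \<le> (1 - a*(2*c1-1)/real n) * phi a c1 n (ka, kb)"
proof -
  note f = reg_facts[OF c0 n1 st big]
  define A where "A = real ka"
  define B where "B = real kb"
  define N where "N = real n"
  define w where "w = W a c1"
  have ph: "phi a c1 n (ka, kb) = (N-B) + w*(N-A)"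
     "phi a c1 n (ka, kb+1) = (N-B) + w*(N-A) - 1"
     "phi a c1 n (ka+1, kb) = (N-B) + w*(N-A) - w"
     "phi a c1 n (ka+1, kb-1) = (N-B) + w*(N-A) - w + 1"
    using f(4) by (simp_all add: phi_def A_def B_def N_def w_def of_nat_diff algebra_simps)
  have "P1 a n ka kb * ((N-B) + w*(N-A) - 1) + P2 a n ka kb * ((N-B) + w*(N-A) - w)
   + P3 a n ka kb * ((N-B) + w*(N-A) - w + 1)
   + (1 - P1 a n ka kb - P2 a n ka kb - P3 a n ka kb) * ((N-B) + w*(N-A))
   \<le> (1 - a*(2*c1-1)/N) * ((N-B) + w*(N-A))"
    unfolding P1_def P2_def P3_def A_def[symmetric] B_def[symmetric] N_def[symmetric]
    apply (rule drift_real)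
    using a0 a1 c0 c1 f n1 big W1[OF a0 a1 c0 c1] Wid[OF a0 c1]
    by (auto simp: A_def B_def N_def w_def)
  thus ?thesis unfolding ph N_def .
qed

lemma tb: "0 \<le> (p::real) \<Longrightarrow> (p \<noteq> 0 \<Longrightarrow> 0 \<le> v \<and> v \<le> 1 \<and> v \<le> c) \<Longrightarrow> 0 \<le> p * v \<and> p * v \<le> p \<and> p * v \<le> p*c"
  by (cases "p = 0") (auto intro: mult_left_mono mult_left_le)

lemma phi_ge1:
  assumes "0 < a" "a \<le> 1" "1/2 < c1" "c1 < 1" "(ka, kb) \<in> K_states n" "(ka, kb) \<noteq> (n, n)"
  shows "phi a c1 n (ka, kb) \<ge> 1"
proof -
  have w: "W a c1 \<ge> 1" using W1 assms by blast
  have k: "ka \<le> n" "kb \<le> n" using assms by (auto simp: K_states_def)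
  show ?thesis
  proof (cases "kb < n")
    case True
    hence "real n - real kb \<ge> 1" by linarith
    moreover have "W a c1 * (real n - real ka) \<ge> 0" using w k by simp
    ultimately show ?thesis by (simp add: phi_def)
  next
    case False
    hence "ka < n" using assms k by auto
    hence "real n - real ka \<ge> 1" by linarith
    hence "W a c1 * (real n - real ka) \<ge> 1 * 1" using w by (intro mult_mono) auto
    moreover have "real n - real kb \<ge> 0" using k by simp
    ultimately show ?thesis by (simp add: phi_def)
  qed
qed

lemma phi_nonneg:
  assumes "0 < a" "a \<le> 1" "1/2 < c1" "c1 < 1" "(ka, kb) \<in> K_states n"
  shows "phi a c1 n (ka, kb) \<ge> 0"
proof -
  have w: "W a c1 \<ge> 1" using W1 assms by blast
  have k: "ka \<le> n" "kb \<le> n" using assms by (auto simp: K_states_def)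
  thus ?thesis using w by (simp add: phi_def)
qed

lemma main_ind:
  assumes a0: "0 < a" and a1: "a \<le> 1" and c0: "1/2 < c1" and c1: "c1 < 1" and n1: "n \<ge> 1"
  shows "(ka, kb) \<in> K_states n \<Longrightarrow> real ka + real kb \<ge> 2 * c1 * real n \<Longrightarrow>
    0 \<le> K_not_hit a n t (ka, kb) \<and> K_not_hit a n t (ka, kb) \<le> 1 \<and>
    K_not_hit a n t (ka, kb) \<le> (1 - a*(2*c1-1)/real n)^t * phi a c1 n (ka, kb)"
proof (induction t arbitrary: ka kb)
  case 0
  show ?case
  proof (cases "(ka, kb) = (n, n)")
    case True thus ?thesis using phi_nonneg[OF a0 a1 c0 c1 "0.prems"(1)] by simp
  next
    case False thus ?thesis using phi_ge1[OF a0 a1 c0 c1 "0.prems"(1) False] by auto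
  qed
next
  case (Suc t)
  note st = Suc.prems(1) and big = Suc.prems(2)
  note f = reg_facts[OF c0 n1 st big]
  define q where "q = 1 - a*(2*c1-1)/real n"
  have q0: "q \<ge> 0"
  proof -
    have "a*(2*c1-1) \<le> 1*1" using a0 a1 c0 c1 by (intro mult_mono) auto
    hence "a*(2*c1-1)/real n \<le> 1" using n1 by (simp add: divide_le_eq_1)
    thus ?thesis by (simp add: q_def)
  qed
  show ?case
  proof (cases "(ka, kb) = (n, n)")
    case True thus ?thesis using phi_nonneg[OF a0 a1 c0 c1 st] q0 by (simp add: q_def)
  next
    case False
    let ?f = "K_not_hit a n t"
    let ?p1 = "P1 a n ka kb" and ?p2 = "P2 a n ka kb" and ?p3 = "P3 a n ka kb"
    let ?p0 = "1 - P1 a n ka kb - P2 a n ka kb - P3 a n ka kb"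
    have val: "K_not_hit a n (Suc t) (ka, kb) = ?p1 * ?f (ka, kb+1) + ?p2 * ?f (ka+1, kb)
      + ?p3 * ?f (ka+1, kb-1) + ?p0 * ?f (ka, kb)"
    proof -
      have "K_not_hit a n (Suc t) (ka, kb) = (\<Sum>y\<in>K_states n. K_trans a n (ka, kb) y * ?f y)"
        using False by (simp only: K_not_hit.simps if_False)
      also have "\<dots> = ?p1 * ?f (ka, kb+1) + ?p2 * ?f (ka+1, kb)
      + ?p3 * ?f (ka+1, kb-1) + ?p0 * ?f (ka, kb)" by (rule sum_trans[OF st f(4)])
      finally show ?thesis .
    qed
    have pn: "?p1 \<ge> 0" "?p2 \<ge> 0" "?p3 \<ge> 0" using P_nonneg[OF a0 a1 st] by auto
    have p0: "?p0 \<ge> 0" using P_le1[OF a0 a1 c0 n1 st big] by simp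
    have T1: "0 \<le> ?p1 * ?f (ka, kb+1) \<and> ?p1 * ?f (ka, kb+1) \<le> ?p1 \<and>
       ?p1 * ?f (ka, kb+1) \<le> ?p1 * (q^t * phi a c1 n (ka, kb+1))"
    proof (rule tb[OF pn(1)])
      assume "?p1 \<noteq> 0"
      hence "kb \<noteq> n" by (auto simp: P1_def)
      hence "(ka, kb+1) \<in> K_states n" using st f by (auto simp: K_states_def)
      moreover have "real ka + real (kb+1) \<ge> 2 * c1 * real n" using big by simp
      ultimately show "0 \<le> ?f (ka, kb+1) \<and> ?f (ka, kb+1) \<le> 1 \<and> ?f (ka, kb+1) \<le> q^t * phi a c1 n (ka, kb+1)"
        using Suc.IH unfolding q_def by blast
    qed
    have T2: "0 \<le> ?p2 * ?f (ka+1, kb) \<and> ?p2 * ?f (ka+1, kb) \<le> ?p2 \<and>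
       ?p2 * ?f (ka+1, kb) \<le> ?p2 * (q^t * phi a c1 n (ka+1, kb))"
    proof (rule tb[OF pn(2)])
      assume "?p2 \<noteq> 0"
      hence "ka \<noteq> n" by (auto simp: P2_def)
      hence "(ka+1, kb) \<in> K_states n" using st f by (auto simp: K_states_def)
      moreover have "real (ka+1) + real kb \<ge> 2 * c1 * real n" using big by simp
      ultimately show "0 \<le> ?f (ka+1, kb) \<and> ?f (ka+1, kb) \<le> 1 \<and> ?f (ka+1, kb) \<le> q^t * phi a c1 n (ka+1, kb)"
        using Suc.IH unfolding q_def by blast
    qed
    have T3: "0 \<le> ?p3 * ?f (ka+1, kb-1) \<and> ?p3 * ?f (ka+1, kb-1) \<le> ?p3 \<and>
       ?p3 * ?f (ka+1, kb-1) \<le> ?p3 * (q^t * phi a c1 n (ka+1, kb-1))"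
    proof (rule tb[OF pn(3)])
      assume "?p3 \<noteq> 0"
      hence "ka \<noteq> n" by (auto simp: P3_def)
      hence "(ka+1, kb-1) \<in> K_states n" using st f by (auto simp: K_states_def)
      moreover have "real (ka+1) + real (kb-1) \<ge> 2 * c1 * real n" using big f(4) by (simp add: of_nat_diff)
      ultimately show "0 \<le> ?f (ka+1, kb-1) \<and> ?f (ka+1, kb-1) \<le> 1 \<and> ?f (ka+1, kb-1) \<le> q^t * phi a c1 n (ka+1, kb-1)"
        using Suc.IH unfolding q_def by blast
    qed
    have T0: "0 \<le> ?p0 * ?f (ka, kb) \<and> ?p0 * ?f (ka, kb) \<le> ?p0 \<and>
       ?p0 * ?f (ka, kb) \<le> ?p0 * (q^t * phi a c1 n (ka, kb))"
      by (rule tb[OF p0]) (use Suc.IH[OF st big] in \<open>simp add: q_def\<close>)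
    have dr: "?p1 * phi a c1 n (ka, kb+1) + ?p2 * phi a c1 n (ka+1, kb)
      + ?p3 * phi a c1 n (ka+1, kb-1) + ?p0 * phi a c1 n (ka, kb) \<le> q * phi a c1 n (ka, kb)"
      using drift[OF a0 a1 c0 c1 n1 st big] by (simp add: q_def)
    have qt: "q^t \<ge> 0" using q0 by simp
    have "?p1 * (q^t * phi a c1 n (ka, kb+1)) + ?p2 * (q^t * phi a c1 n (ka+1, kb))
      + ?p3 * (q^t * phi a c1 n (ka+1, kb-1)) + ?p0 * (q^t * phi a c1 n (ka, kb))
      = q^t * (?p1 * phi a c1 n (ka, kb+1) + ?p2 * phi a c1 n (ka+1, kb)
      + ?p3 * phi a c1 n (ka+1, kb-1) + ?p0 * phi a c1 n (ka, kb))" by (simp add: algebra_simps)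
    also have "\<dots> \<le> q^t * (q * phi a c1 n (ka, kb))" using dr qt by (rule mult_left_mono)
    also have "\<dots> = q^(Suc t) * phi a c1 n (ka, kb)" by simp
    finally have up: "?p1 * (q^t * phi a c1 n (ka, kb+1)) + ?p2 * (q^t * phi a c1 n (ka+1, kb))
      + ?p3 * (q^t * phi a c1 n (ka+1, kb-1)) + ?p0 * (q^t * phi a c1 n (ka, kb))
      \<le> q^(Suc t) * phi a c1 n (ka, kb)" .
    have one: "?p1 + ?p2 + ?p3 + ?p0 = 1" by simp
    show ?thesis unfolding val q_def[symmetric]
      using T0 T1 T2 T3 up one by linarith
  qed
qed


theorem mainTheorem5:
  fixes a c1 :: real
  assumes "0 < a" "a \<le> 1" "1/2 < c1" "c1 < 1"
  shows "\<exists>C::real. \<forall>n::nat. \<forall>ka kb. n \<ge> 1 \<longrightarrow> (ka, kb) \<in> K_states n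
           \<longrightarrow> real ka + real kb \<ge> 2 * c1 * real n
           \<longrightarrow> K_hit_time_exp a n (ka, kb)
               \<le> ennreal (real n / (a * (2 * c1 - 1))
                     * (ln (2 * real n) + ln (ln (2 * real n)) + C))"
proof (intro exI allI impI)
  note a0 = assms(1) and a1 = assms(2) and c0 = assms(3) and c1 = assms(4)
  fix n ka kb :: nat
  assume n1: "n \<ge> 1" and st: "(ka, kb) \<in> K_states n" and big: "real ka + real kb \<ge> 2 * c1 * real n"
  define N where "N = real n"
  define r where "r = a*(2*c1-1)"
  define q where "q = 1 - r/N"
  define f where "f = (\<lambda>t. K_not_hit a n t (ka, kb))"
  define w where "w = W a c1"
  define \<Phi> where "\<Phi> = max 1 (phi a c1 n (ka, kb))"
  have hN: "N \<ge> 1" using n1 by (simp add: N_def)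
  have r0: "r > 0" using a0 c0 by (simp add: r_def)
  have r1: "r \<le> 1"
  proof -
    have "a*(2*c1-1) \<le> 1*1" using a0 a1 c0 c1 by (intro mult_mono) auto
    thus ?thesis by (simp add: r_def)
  qed
  have rN: "r/N \<le> 1" "r/N > 0" using r1 r0 hN by (auto simp: divide_le_eq_1)
  have q0: "q \<ge> 0" "q < 1" using rN by (auto simp: q_def)
  have w1: "w \<ge> 1" using W1[OF a0 a1 c0 c1] by (simp add: w_def)
  have Phi1: "\<Phi> \<ge> 1" by (simp add: \<Phi>_def)
  have fb: "0 \<le> f t \<and> f t \<le> 1 \<and> f t \<le> \<Phi> * q^t" for t
  proof -
    have "0 \<le> f t \<and> f t \<le> 1 \<and> f t \<le> q^t * phi a c1 n (ka, kb)"
      using main_ind[OF a0 a1 c0 c1 n1 st big, of t] by (simp add: f_def q_def r_def N_def)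
    moreover have "q^t * phi a c1 n (ka, kb) \<le> q^t * \<Phi>"
      using q0 by (intro mult_left_mono) (auto simp: \<Phi>_def)
    ultimately show ?thesis by (simp add: mult.commute)
  qed
  have sg: "summable (\<lambda>t. \<Phi> * q^t)" using q0 by (intro summable_mult summable_geometric) simp
  have sf: "summable f"
    by (rule summable_comparison_test'[OF sg, of 0]) (use fb in auto)
  have PhiN: "\<Phi> \<le> (1+w)*N"
  proof -
    have k: "ka \<le> n" "kb \<le> n" using st by (auto simp: K_states_def)
    have "phi a c1 n (ka, kb) = (N - real kb) + w*(N - real ka)" by (simp add: phi_def N_def w_def)
    also have "\<dots> \<le> N + w*N" using k w1 hN by (intro add_mono mult_left_mono) (auto simp: N_def)
    finally have "phi a c1 n (ka, kb) \<le> (1+w)*N" by (simp add: algebra_simps)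
    moreover have "1*1 \<le> (1+w)*N" using w1 hN by (intro mult_mono) auto
    ultimately show ?thesis by (simp add: \<Phi>_def)
  qed
  define T where "T = nat \<lceil>N/r * ln \<Phi>\<rceil>"
  have lnPhi: "ln \<Phi> \<ge> 0" using Phi1 by simp
  have T1: "real T \<ge> N/r * ln \<Phi>" unfolding T_def by linarith
  have T2: "real T \<le> N/r * ln \<Phi> + 1"
  proof -
    have "N/r * ln \<Phi> \<ge> 0" using lnPhi r0 hN by simp
    thus ?thesis unfolding T_def by linarith
  qed
  have qT: "\<Phi> * q^T \<le> 1"
  proof -
    have "q \<le> exp (-(r/N))" using exp_ge_add_one_self[of "-(r/N)"] by (simp add: q_def)
    hence "q^T \<le> exp (-(r/N))^T" using q0 by (intro power_mono) auto
    also have "\<dots> = exp (real T * (-(r/N)))" by (rule exp_of_nat_mult[symmetric])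
    also have "\<dots> \<le> exp (- ln \<Phi>)"
    proof -
      have "real T * (r/N) \<ge> N/r * ln \<Phi> * (r/N)" using T1 rN by (intro mult_right_mono) auto
      also have "N/r * ln \<Phi> * (r/N) = ln \<Phi>" using r0 hN by simp
      finally show ?thesis by simp
    qed
    also have "\<dots> = 1/\<Phi>" using Phi1 by (simp add: exp_minus exp_ln inverse_eq_divide)
    finally have "q^T \<le> 1/\<Phi>" .
    thus ?thesis using Phi1 by (simp add: field_simps)
  qed
  have tail: "(\<Sum>t. f (t + T)) \<le> N/r"
  proof -
    have st2: "summable (\<lambda>t. f (t + T))" using sf by (rule summable_ignore_initial_segment)
    have sg2: "summable (\<lambda>t. (\<Phi> * q^T) * q^t)" using q0 by (intro summable_mult summable_geometric) simp
    have "(\<Sum>t. f (t + T)) \<le> (\<Sum>t. (\<Phi> * q^T) * q^t)"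
    proof (rule suminf_le[OF _ st2 sg2])
      fix t show "f (t + T) \<le> \<Phi> * q ^ T * q ^ t" using fb[of "t+T"] by (simp add: power_add mult_ac)
    qed
    also have "\<dots> = (\<Phi> * q^T) * (1/(1-q))"
      using q0 by (simp add: suminf_mult summable_geometric suminf_geometric)
    also have "\<dots> \<le> 1 * (1/(1-q))" using qT q0 by (intro mult_right_mono) auto
    also have "1/(1-q) = N/r" using r0 hN by (simp add: q_def)
    finally show ?thesis by simp
  qed
  have head: "(\<Sum>t<T. f t) \<le> real T"
    using sum_bounded_above[of "{..<T}" f 1] fb by simp
  have sumf: "suminf f \<le> N/r * (ln \<Phi> + 2)"
  proof -
    have "suminf f = (\<Sum>t. f (t + T)) + (\<Sum>t<T. f t)" using sf by (rule suminf_split_initial_segment)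
    also have "\<dots> \<le> N/r + (N/r * ln \<Phi> + 1)" using tail head T2 by linarith
    also have "1 \<le> N/r" using r1 r0 hN by (simp add: le_divide_eq)
    hence "N/r + (N/r * ln \<Phi> + 1) \<le> N/r * (ln \<Phi> + 2)"
      by (simp only: distrib_left mult_2_right)
    finally show ?thesis .
  qed
  have lnb: "ln \<Phi> \<le> ln (1+w) + ln (2*N)"
  proof -
    have "ln \<Phi> \<le> ln ((1+w)*N)" using PhiN Phi1 by simp
    also have "\<dots> = ln (1+w) + ln N" using w1 hN by (simp add: ln_mult)
    also have "ln N \<le> ln (2*N)" using hN by simp
    finally show ?thesis by simp
  qed
  have lnln: "ln (ln (2*N)) \<ge> -1"
  proof -
    have l2: "ln 2 \<ge> (1/2::real)" using ln_le_minus_one[of "1/2::real"] by (simp add: ln_div)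
    have "ln (2*N) \<ge> ln 2" using hN by simp
    hence "ln (2*N) \<ge> 1/2" using l2 by linarith
    hence "ln (ln (2*N)) \<ge> ln (1/2)" by (simp del: ln_less_cancel_iff)
    moreover have "ln (1/2::real) = - ln 2" by (simp add: ln_div)
    ultimately show ?thesis using ln_2_less_1 by linarith
  qed
  have final: "suminf f \<le> real n / (a * (2 * c1 - 1)) * (ln (2 * real n) + ln (ln (2 * real n)) + (ln (1 + W a c1) + 3))"
  proof -
    have "ln \<Phi> + 2 \<le> ln (2*N) + ln (ln (2*N)) + (ln (1+w) + 3)" using lnb lnln by linarith
    hence "N/r * (ln \<Phi> + 2) \<le> N/r * (ln (2*N) + ln (ln (2*N)) + (ln (1+w) + 3))"
      using r0 hN by (intro mult_left_mono) auto
    thus ?thesis using sumf by (simp add: N_def r_def w_def)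
  qed
  have "K_hit_time_exp a n (ka, kb) = ennreal (suminf f)"
  proof -
    have "(\<Sum>t. ennreal (f t)) = ennreal (suminf f)" using fb sf by (intro suminf_ennreal2) auto
    moreover have "K_hit_time_exp a n (ka, kb) = (\<Sum>t. ennreal (f t))"
      by (simp add: K_hit_time_exp_def f_def)
    ultimately show ?thesis by simp
  qed
  thus "K_hit_time_exp a n (ka, kb) \<le> ennreal (real n / (a * (2 * c1 - 1)) * (ln (2 * real n) + ln (ln (2 * real n)) + (ln (1 + W a c1) + 3)))"
    using final by (simp add: ennreal_leI)
qed

end
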